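(* Let $X$ be the ARH(1) process described in the context, with $k_n$ a truncation parameter ($k_n\to\infty$, $k_n/n<1$) such that, for some $\beta>1/2$, $\sqrt{k_n}\,\Lambda_{k_n}=o\left(n^{1/4}/(\ln(n))^{\beta}\right)$. Assume Assumptions A1, A2, A3 and A4 hold and that $\rho$ is a trace operator. Suppose $M_n$ is a sequence with $\|\mathcal{D}_n\mathcal{C}_n^{-1}-D_XC_X^{-1}\|_{\mathcal{L}(H)}=\mathcal{O}(M_n)$ almost surely, and $\Lambda^{\rho}_{k_n}=o(1/M_n)$ as $n\to\infty$. Then, as $n\to\infty$, $$\sup_{1\le j\le k_n}\|\psi_{n,j}-\psi'_{n,j}\|_H\to0\ \text{a.s.},\qquad \sup_{1\le j\le k_n}\|\widetilde{\psi}_{n,j}-\widetilde{\psi}'_{n,j}\|_H\to0\ \text{a.s.},$$ where $\psi'_{n,j}=\mathrm{sgn}\langle\psi_{n,j},\psi_j\rangle_H\,\psi_j$ and $\widetilde{\psi}'_{n,j}=\mathrm{sgn}\langle\widetilde\psi_{n,j},\widetilde\psi_j\rangle_H\,\widetilde\psi_j$, with $\mathrm{sgn}(a)=\mathbf{1}_{a\ge0}-\mathbf{1}_{a<0}$.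
   Context: $H$ is a real separable Hilbert space and $\mathcal{L}(H)$ is the space of bounded linear operators on $H$ with the operator norm. $X=\{X_n,\ n\in\mathbb{Z}\}$ is a zero-mean ARH(1) process: $X_n=\rho(X_{n-1})+\varepsilon_n$, where $\rho\in\mathcal{L}(H)$ satisfies $\|\rho^k\|_{\mathcal{L}(H)}<1$ for all $k\ge k_0$, for some $k_0$; $\varepsilon$ is an $H$-valued strong white noise uncorrelated with the initial condition, and $X$ is the unique stationary solution. For $x,y\in H$, $(x\otimes y)(f)=\langle x,f\rangle_H\, y$. $C_X=\mathrm{E}[X_0\otimes X_0]$ has eigenvalues $C_1\ge C_2\ge\dots$ with orthonormal eigenvectors $\phi_j$; $D_X=\mathrm{E}[X_0\otimes X_1]$, and $\rho=D_XC_X^{-1}$. $\mathcal{C}_n=\frac1n\sum_{i=0}^{n-1}X_i\otimes X_i$ has eigenvalues $C_{n,1}\ge\dots\ge C_{n,n}\ge0=C_{n,n+1}=\dots$ with orthonormal eigenvectors $\phi_{n,j}$; $\mathcal{C}_n^{-1}=\sum_{j:\,C_{n,j}>0}C_{n,j}^{-1}\phi_{n,j}\otimes\phi_{n,j}$. $\mathcal{D}_n=\frac{1}{n-1}\sum_{i=0}^{n-2}X_i\otimes X_{i+1}$. $\Lambda_{k_n}=\sup_{1\le j\le k_n}(C_j-C_{j+1})^{-1}$. Assumption A1: $\|X_0\|_H<M$ a.s. Assumption A2: $C_{n,k_n}>0$ a.s. Assumption A3: $C_j>0$ for all $j$, $D_X$ is nuclear, and $\rho$ is compact. Under A3, $\rho$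 has the singular value decomposition $\rho(x)=\sum_{j\ge1}\rho_j\langle x,\psi_j\rangle_H\widetilde\psi_j$, with $\rho(\psi_j)=\rho_j\widetilde\psi_j$, orthonormal right singular vectors $\psi_j$, orthonormal left singular vectors $\widetilde\psi_j$, and $|\rho_1|\ge|\rho_2|\ge\dots$. The compact operator $\mathcal{D}_n\mathcal{C}_n^{-1}$ (for $n$ large) has singular value decomposition $\mathcal{D}_n\mathcal{C}_n^{-1}(h)=\sum_{j=1}^{n}\widehat\rho_{n,j}\langle h,\psi_{n,j}\rangle_H\widetilde\psi_{n,j}$, with $\mathcal{D}_n\mathcal{C}_n^{-1}(\psi_{n,j})=\widehat\rho_{n,j}\widetilde\psi_{n,j}$ and orthonormal families $\{\psi_{n,j}\}$, $\{\widetilde\psi_{n,j}\}$. $\Lambda^{\rho}_{k_n}=\sup_{1\le j\le k_n}(|\rho_j|^2-|\rho_{j+1}|^2)^{-1}$ (assumed finite). Assumption A4: $\sup_{j\ge1}|\rho_j|+\sup_{j\ge1}|\widehat\rho_{n,j}|\le 1$. *)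

theory Defs
  imports "HOL-Probability.Probability" "HOL-Library.Landau_Symbols"
begin

definition tens :: "'a::real_inner \<Rightarrow> 'a \<Rightarrow> 'a \<Rightarrow> 'a" where
  "tens x y = (\<lambda>f. inner x f *\<^sub>R y)"

definition sgn01 :: "real \<Rightarrow> real" where
  "sgn01 a = (if a \<ge> 0 then 1 else -1)"

definition compact_op :: "('a::real_normed_vector \<Rightarrow> 'a) \<Rightarrow> bool" where
  "compact_op T \<longleftrightarrow> bounded_linear T \<and> compact (closure (T ` ball 0 1))"

text \<open>Nuclear (= trace class on a Hilbert space) operator.\<close>
definition nuclear_op :: "('a::real_inner \<Rightarrow> 'a) \<Rightarrow> bool" where
  "nuclear_op T \<longleftrightarrow> bounded_linear T \<and>
     (\<exists>a b :: nat \<Rightarrow> 'a. summable (\<lambda>j. norm (a j) * norm (b j)) \<and>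
        (\<forall>x. (\<lambda>j. tens (a j) (b j) x) sums T x))"

definition orthonormal_on :: "nat set \<Rightarrow> (nat \<Rightarrow> 'a::real_inner) \<Rightarrow> bool" where
  "orthonormal_on J e \<longleftrightarrow> (\<forall>i\<in>J. \<forall>j\<in>J. inner (e i) (e j) = (if i = j then 1 else 0))"

definition op_expect :: "'w measure \<Rightarrow> ('w \<Rightarrow> 'a \<Rightarrow> 'a::{banach,second_countable_topology}) \<Rightarrow> 'a \<Rightarrow> 'a" where
  "op_expect M T = (\<lambda>f. integral\<^sup>L M (\<lambda>\<omega>. T \<omega> f))"

definition emp_C :: "(int \<Rightarrow> 'w \<Rightarrow> 'a::real_inner) \<Rightarrow> nat \<Rightarrow> 'w \<Rightarrow> 'a \<Rightarrow> 'a" where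
  "emp_C X n \<omega> = (\<lambda>f. (1 / real n) *\<^sub>R (\<Sum>i<n. tens (X (int i) \<omega>) (X (int i) \<omega>) f))"

definition emp_D :: "(int \<Rightarrow> 'w \<Rightarrow> 'a::real_inner) \<Rightarrow> nat \<Rightarrow> 'w \<Rightarrow> 'a \<Rightarrow> 'a" where
  "emp_D X n \<omega> = (\<lambda>f. (1 / (real n - 1)) *\<^sub>R
       (\<Sum>i<n - 1. tens (X (int i) \<omega>) (X (int i + 1) \<omega>) f))"

text \<open>Pseudo-inverse C_n^{-1} built from an eigen-decomposition (values c, vectors e) of C_n.\<close>
definition emp_Cinv :: "(nat \<Rightarrow> real) \<Rightarrow> (nat \<Rightarrow> 'a::real_inner) \<Rightarrow> nat \<Rightarrow> 'a \<Rightarrow> 'a" where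
  "emp_Cinv c e n = (\<lambda>h. \<Sum>j\<in>{j\<in>{1..n}. c j > 0}. (1 / c j) *\<^sub>R tens (e j) (e j) h)"

definition Lambda_gap :: "(nat \<Rightarrow> real) \<Rightarrow> nat \<Rightarrow> real" where
  "Lambda_gap c k = Max ((\<lambda>j. 1 / (c j - c (Suc j))) ` {1..k})"

end

theory Submission
  imports Defs
begin

lemma orth_inner: "orthonormal_on J e \<Longrightarrow> i \<in> J \<Longrightarrow> l \<in> J \<Longrightarrow> inner (e i) (e l) = (if i = l then 1 else 0)"
  unfolding orthonormal_on_def by blast

lemma orth_sum_inner:
  assumes o: "orthonormal_on J e" and I: "finite I" "I \<subseteq> J" and l: "l \<in> J"
  shows "inner (\<Sum>i\<in>I. c i *\<^sub>R e i) (e l) = (if l \<in> I then c l else 0)"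
proof -
  have "inner (\<Sum>i\<in>I. c i *\<^sub>R e i) (e l) = (\<Sum>i\<in>I. c i * (if i = l then 1 else 0))"
    using o I l by (auto simp: inner_sum_left orth_inner intro!: sum.cong)
  also have "\<dots> = (if l \<in> I then c l else 0)"
    using I by (simp add: sum.delta' if_distrib cong: if_cong)
  finally show ?thesis .
qed

lemma orth_sum_norm2:
  assumes o: "orthonormal_on J e" and I: "finite I" "I \<subseteq> J"
  shows "(norm (\<Sum>i\<in>I. c i *\<^sub>R e i))\<^sup>2 = (\<Sum>i\<in>I. (c i)\<^sup>2)"
proof -
  have "(norm (\<Sum>i\<in>I. c i *\<^sub>R e i))\<^sup>2 = inner (\<Sum>i\<in>I. c i *\<^sub>R e i) (\<Sum>i\<in>I. c i *\<^sub>R e i)"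
    by (simp add: power2_norm_eq_inner)
  also have "\<dots> = (\<Sum>l\<in>I. c l * inner (\<Sum>i\<in>I. c i *\<^sub>R e i) (e l))"
    by (simp add: inner_sum_right)
  also have "\<dots> = (\<Sum>l\<in>I. (c l)\<^sup>2)"
    using o I by (intro sum.cong) (auto simp: orth_sum_inner subsetD power2_eq_square)
  finally show ?thesis .
qed

lemma orth_pyth:
  assumes o: "orthonormal_on J e" and I: "finite I" "I \<subseteq> J"
  shows "(norm x)\<^sup>2 = (\<Sum>i\<in>I. (inner (e i) x)\<^sup>2) + (norm (x - (\<Sum>i\<in>I. inner (e i) x *\<^sub>R e i)))\<^sup>2"
    and "\<And>l. l \<in> I \<Longrightarrow> inner (x - (\<Sum>i\<in>I. inner (e i) x *\<^sub>R e i)) (e l) = 0"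
proof -
  define P where "P = (\<Sum>i\<in>I. inner (e i) x *\<^sub>R e i)"
  have Pl: "inner P (e l) = inner (e l) x" if "l \<in> I" for l
    using orth_sum_inner[OF o I, of l "\<lambda>i. inner (e i) x"] that I unfolding P_def by auto
  show "inner (x - (\<Sum>i\<in>I. inner (e i) x *\<^sub>R e i)) (e l) = 0" if "l \<in> I" for l
    using Pl[OF that] unfolding P_def[symmetric] by (metis inner_commute inner_diff_left right_minus_eq)
  have PP: "inner P P = (\<Sum>i\<in>I. (inner (e i) x)\<^sup>2)"
    using orth_sum_norm2[OF o I, of "\<lambda>i. inner (e i) x"] unfolding P_def by (simp add: power2_norm_eq_inner)
  have Px: "inner x P = (\<Sum>i\<in>I. (inner (e i) x)\<^sup>2)"
    unfolding P_def by (simp add: inner_sum_right power2_eq_square inner_commute)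
  have "(norm (x - P))\<^sup>2 = inner x x - 2 * inner x P + inner P P"
    by (simp add: power2_norm_eq_inner inner_diff_left inner_diff_right inner_commute)
  then show "(norm x)\<^sup>2 = (\<Sum>i\<in>I. (inner (e i) x)\<^sup>2) + (norm (x - (\<Sum>i\<in>I. inner (e i) x *\<^sub>R e i)))\<^sup>2"
    unfolding P_def[symmetric] using PP Px by (simp add: power2_norm_eq_inner)
qed

lemma bessel_fin:
  assumes o: "orthonormal_on J e" and I: "finite I" "I \<subseteq> J"
  shows "(\<Sum>i\<in>I. (inner (e i) x)\<^sup>2) \<le> (norm x)\<^sup>2"
  using orth_pyth(1)[OF o I, of x] by (metis le_add_same_cancel1 zero_le_power2)

lemma bessel_summable:
  assumes o: "orthonormal_on {1..} e"
  shows "summable (\<lambda>i. (inner (e (Suc i)) x)\<^sup>2)" "(\<Sum>i. (inner (e (Suc i)) x)\<^sup>2) \<le> (norm x)\<^sup>2"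
proof -
  have b: "(\<Sum>i<N. (inner (e (Suc i)) x)\<^sup>2) \<le> (norm x)\<^sup>2" for N
  proof -
    have "(\<Sum>i<N. (inner (e (Suc i)) x)\<^sup>2) = (\<Sum>i\<in>Suc ` {..<N}. (inner (e i) x)\<^sup>2)"
      by (simp add: sum.reindex)
    also have "\<dots> \<le> (norm x)\<^sup>2" by (rule bessel_fin[OF o]) auto
    finally show ?thesis .
  qed
  show "summable (\<lambda>i. (inner (e (Suc i)) x)\<^sup>2)"
    by (rule summableI_nonneg_bounded[where x="(norm x)\<^sup>2"]) (use b in auto)
  then show "(\<Sum>i. (inner (e (Suc i)) x)\<^sup>2) \<le> (norm x)\<^sup>2"
    using b by (intro suminf_le_const) auto
qed

lemma tens_apply: "tens a b x = inner a x *\<^sub>R b" by (simp add: tens_def)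

lemma ser_inner_q:
  assumes q: "orthonormal_on {1..} q"
    and Rs: "(\<lambda>i. s (Suc i) *\<^sub>R tens (p (Suc i)) (q (Suc i)) x) sums Rx"
    and l: "l \<ge> 1"
  shows "inner Rx (q l) = s l * inner (p l) x"
proof -
  have "(\<lambda>i. inner (s (Suc i) *\<^sub>R tens (p (Suc i)) (q (Suc i)) x) (q l)) sums inner Rx (q l)"
    by (rule bounded_linear.sums[OF bounded_linear_inner_left Rs])
  moreover have "(\<lambda>i. inner (s (Suc i) *\<^sub>R tens (p (Suc i)) (q (Suc i)) x) (q l))
      = (\<lambda>i. if i = l - 1 then s l * inner (p l) x else 0)"
  proof
    fix i
    show "inner (s (Suc i) *\<^sub>R tens (p (Suc i)) (q (Suc i)) x) (q l) = (if i = l - 1 then s l * inner (p l) x else 0)"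
      using orth_inner[OF q, of "Suc i" l] l by (auto simp: tens_apply)
  qed
  ultimately have "(\<lambda>i. if i = l - 1 then s l * inner (p l) x else 0) sums inner Rx (q l)" by simp
  moreover have "(\<lambda>i. if i = l - 1 then s l * inner (p l) x else 0) sums (s l * inner (p l) x)"
    using sums_single[of "l - 1" "\<lambda>_. s l * inner (p l) x"] .
  ultimately show ?thesis using sums_unique2 by blast
qed

lemma ser_inner2:
  assumes q: "orthonormal_on {1..} q"
    and Rs: "\<And>x. (\<lambda>i. s (Suc i) *\<^sub>R tens (p (Suc i)) (q (Suc i)) x) sums R x"
  shows "(\<lambda>i. (s (Suc i))\<^sup>2 * inner (p (Suc i)) x * inner (p (Suc i)) y) sums inner (R x) (R y)"
proof -
  have "(\<lambda>i. inner (s (Suc i) *\<^sub>R tens (p (Suc i)) (q (Suc i)) x) (R y)) sums inner (R x) (R y)"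
    by (rule bounded_linear.sums[OF bounded_linear_inner_left Rs])
  moreover have "inner (s (Suc i) *\<^sub>R tens (p (Suc i)) (q (Suc i)) x) (R y)
     = (s (Suc i))\<^sup>2 * inner (p (Suc i)) x * inner (p (Suc i)) y" for i
    using ser_inner_q[OF q Rs[of y], of "Suc i"]
    by (simp add: tens_apply inner_commute power2_eq_square)
  ultimately show ?thesis by simp
qed

lemma fin_inner2:
  assumes u: "orthonormal_on {1..n} u" and v: "orthonormal_on {1..n} v"
    and T: "\<And>x. T x = (\<Sum>l=1..n. \<sigma> l *\<^sub>R tens (u l) (v l) x)"
  shows "inner (T x) (T y) = (\<Sum>l=1..n. (\<sigma> l)\<^sup>2 * inner (u l) x * inner (u l) y)"
proof -
  have Tx: "T z = (\<Sum>l\<in>{1..n}. (\<sigma> l * inner (u l) z) *\<^sub>R v l)" for z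
    by (simp add: T tens_apply)
  have "inner (T x) (T y) = (\<Sum>l\<in>{1..n}. (\<sigma> l * inner (u l) y) * inner (T x) (v l))"
    by (simp add: Tx[of y] inner_sum_right)
  also have "\<dots> = (\<Sum>l=1..n. (\<sigma> l)\<^sup>2 * inner (u l) x * inner (u l) y)"
    by (intro sum.cong refl) (simp add: Tx[of x] orth_sum_inner[OF v] power2_eq_square)
  finally show ?thesis .
qed

lemma homog_nontriv:
  fixes A :: "nat \<Rightarrow> nat \<Rightarrow> real"
  shows "m < j \<Longrightarrow> \<exists>d. (\<exists>i<j. d i \<noteq> 0) \<and> (\<forall>l<m. (\<Sum>i<j. A l i * d i) = 0)"
proof (induction m arbitrary: j A)
  case 0
  then show ?case by (intro exI[of _ "\<lambda>_. 1"]) auto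
next
  case (Suc m)
  then obtain j' where j: "j = Suc j'" and mj: "m < j'" by (cases j) auto
  show ?case
  proof (cases "\<forall>i<j. A m i = 0")
    case True
    from Suc.IH[of j A] Suc.prems obtain d where d: "\<exists>i<j. d i \<noteq> 0" "\<forall>l<m. (\<Sum>i<j. A l i * d i) = 0"
      by auto
    show ?thesis
      using d True by (intro exI[of _ d]) (auto simp: less_Suc_eq)
  next
    case False
    then obtain i0 where i0: "i0 < j" "A m i0 \<noteq> 0" by auto
    define \<tau> where "\<tau> i = (if i = i0 then j' else if i = j' then i0 else i)" for i
    have tt: "\<tau> (\<tau> i) = i" for i by (auto simp: \<tau>_def)
    have tj: "i < j \<Longrightarrow> \<tau> i < j" for i using i0 j by (auto simp: \<tau>_def)
    define B where "B l i = A l (\<tau> i)" for l i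
    have Bm: "B m j' \<noteq> 0" using i0 by (simp add: B_def \<tau>_def)
    define A' where "A' l i = B l i - (B m i / B m j') * B l j'" for l i
    from Suc.IH[of j' A'] mj obtain d' where d': "\<exists>i<j'. d' i \<noteq> 0" "\<forall>l<m. (\<Sum>i<j'. A' l i * d' i) = 0"
      by auto
    define S where "S = (\<Sum>i<j'. B m i * d' i)"
    define dB where "dB i = (if i < j' then d' i else - S / B m j')" for i
    have sB: "(\<Sum>i<j. B l i * dB i) = (\<Sum>i<j'. B l i * d' i) - B l j' * S / B m j'" for l
      by (simp add: j dB_def)
    have rowB: "(\<Sum>i<j. B l i * dB i) = 0" if "l < Suc m" for l
    proof (cases "l = m")
      case True then show ?thesis using Bm by (simp add: sB S_def)
    next
      case False
      then have "l < m" using that by simp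
      then have "(\<Sum>i<j'. A' l i * d' i) = 0" using d' by auto
      moreover have "(\<Sum>i<j'. A' l i * d' i) = (\<Sum>i<j'. B l i * d' i) - B l j' * S / B m j'"
        by (simp add: A'_def S_def algebra_simps sum_subtractf sum_distrib_left sum_divide_distrib)
      ultimately show ?thesis by (simp add: sB)
    qed
    define d where "d i = dB (\<tau> i)" for i
    have reidx: "(\<Sum>i<j. A l i * d i) = (\<Sum>i<j. B l i * dB i)" for l
      unfolding d_def B_def
      by (rule sum.reindex_bij_witness[where i=\<tau> and j=\<tau>]) (auto simp: tt tj)
    have nz: "\<exists>i<j. d i \<noteq> 0"
    proof -
      from d' obtain i where "i < j'" "d' i \<noteq> 0" by auto
      then show ?thesis using j tj[of i] by (intro exI[of _ "\<tau> i"]) (auto simp: d_def tt dB_def)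
    qed
    show ?thesis using nz rowB reidx by (intro exI[of _ d]) auto
  qed
qed

lemma exists_orth_vec:
  assumes e: "orthonormal_on E e" and E: "{1..j} \<subseteq> E" and j: "j \<ge> 1"
  shows "\<exists>d. (\<Sum>i=1..j. (d i)\<^sup>2) = 1 \<and> (\<forall>l\<in>{1..<j}. inner (\<Sum>i=1..j. d i *\<^sub>R e i) (f l) = 0)"
proof -
  obtain d0 where d0: "\<exists>i<j. d0 i \<noteq> 0"
    "\<forall>l<j - 1. (\<Sum>i<j. inner (e (Suc i)) (f (Suc l)) * d0 i) = 0"
    using homog_nontriv[of "j - 1" j "\<lambda>l i. inner (e (Suc i)) (f (Suc l))"] j by auto
  have img: "{1..j} = Suc ` {..<j}" by (simp add: image_Suc_lessThan)
  define N where "N = (\<Sum>i<j. (d0 i)\<^sup>2)"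
  have Npos: "N > 0"
  proof -
    from d0 obtain i where "i < j" "d0 i \<noteq> 0" by auto
    then have "0 < (d0 i)\<^sup>2" by simp
    also have "\<dots> \<le> N" unfolding N_def using \<open>i < j\<close>
      by (intro member_le_sum) auto
    finally show ?thesis .
  qed
  define d where "d i = d0 (i - 1) / sqrt N" for i
  have "(\<Sum>i=1..j. (d i)\<^sup>2) = (\<Sum>i<j. (d0 i)\<^sup>2 / N)"
    unfolding img using Npos by (simp add: sum.reindex d_def power_divide)
  also have "\<dots> = 1" using Npos by (simp add: N_def[symmetric] sum_divide_distrib[symmetric])
  finally have n1: "(\<Sum>i=1..j. (d i)\<^sup>2) = 1" .
  have orth: "inner (\<Sum>i=1..j. d i *\<^sub>R e i) (f l) = 0" if "l \<in> {1..<j}" for l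
  proof -
    have "inner (\<Sum>i=1..j. d i *\<^sub>R e i) (f l) = (\<Sum>i<j. inner (e (Suc i)) (f (Suc (l - 1))) * d0 i) / sqrt N"
      unfolding img using that by (simp add: sum.reindex d_def inner_sum_left sum_divide_distrib mult.commute)
    also have "\<dots> = 0"
    proof -
      have "Suc (l - 1) = l" using that by auto
      moreover have "l - 1 < j - 1" using that by auto
      ultimately show ?thesis using d0(2) by (metis div_0)
    qed
    finally show ?thesis .
  qed
  show ?thesis using n1 orth by blast
qed

lemma sq_bound_aux:
  fixes x m d :: real
  assumes "0 \<le> x" "0 < m" "m * x \<le> d * sqrt x"
  shows "x \<le> (d / m)\<^sup>2"
proof (cases "x = 0")
  case True then show ?thesis by simp
next
  case False
  then have sp: "sqrt x > 0" using assms by simp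
  have "(m * sqrt x) * sqrt x \<le> d * sqrt x" using assms by (simp add: mult.assoc)
  then have "m * sqrt x \<le> d" using sp by (rule mult_right_le_imp_le)
  then have "sqrt x \<le> d / m" using assms by (simp add: field_simps)
  then have "(sqrt x)\<^sup>2 \<le> (d / m)\<^sup>2" using sp by (intro power_mono) auto
  then show ?thesis using assms by simp
qed

lemma form_close:
  fixes R T :: "'a::real_inner \<Rightarrow> 'a"
  assumes close: "\<And>x. norm (R x - T x) \<le> e * norm x"
    and Rb: "\<And>x. norm (R x) \<le> norm x" and Tb: "\<And>x. norm (T x) \<le> norm x"
  shows "\<bar>inner (R x) (R y) - inner (T x) (T y)\<bar> \<le> 2 * e * norm x * norm y"
proof -
  have "inner (R x) (R y) - inner (T x) (T y) = inner (R x - T x) (R y) + inner (T x) (R y - T y)"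
    by (simp add: inner_diff_left inner_diff_right)
  also have "\<bar>\<dots>\<bar> \<le> norm (R x - T x) * norm (R y) + norm (T x) * norm (R y - T y)"
    by (intro order.trans[OF abs_triangle_ineq] add_mono Cauchy_Schwarz_ineq2)
  also have "\<dots> \<le> (e * norm x) * norm y + norm x * (e * norm y)"
    by (intro add_mono mult_mono close Rb Tb) (auto intro: order.trans[OF norm_ge_zero close])
  finally show ?thesis by (simp add: algebra_simps)
qed

lemma antimono_from:
  fixes f :: "nat \<Rightarrow> real"
  assumes "\<And>i. a \<le> i \<Longrightarrow> i < b \<Longrightarrow> f (Suc i) \<le> f i"
  shows "a \<le> i \<Longrightarrow> i \<le> k \<Longrightarrow> k \<le> b \<Longrightarrow> f k \<le> f i"
proof (induction k)
  case 0 then show ?case by simp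
next
  case (Suc k)
  show ?case
  proof (cases "i \<le> k")
    case True
    then have "f k \<le> f i" using Suc by simp
    moreover have "f (Suc k) \<le> f k" using assms[of k] Suc True by simp
    ultimately show ?thesis by simp
  next
    case False then have "i = Suc k" using Suc by simp
    then show ?thesis by simp
  qed
qed

lemma norm_sq1: "(norm (x::'a::real_normed_vector))\<^sup>2 = 1 \<Longrightarrow> norm x = 1"
  by (metis norm_ge_zero power2_eq_1_iff neg_0_le_iff_le zero_neq_one linorder_not_le le_less_trans neg_less_0_iff_less zero_less_one)

locale svp =
  fixes R T :: "'a::real_inner \<Rightarrow> 'a" and p q u v :: "nat \<Rightarrow> 'a"
    and s \<sigma> :: "nat \<Rightarrow> real" and n :: nat and e :: real
  assumes p: "orthonormal_on {1..} p" and q: "orthonormal_on {1..} q"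
    and Rs: "\<And>x. (\<lambda>i. s (Suc i) *\<^sub>R tens (p (Suc i)) (q (Suc i)) x) sums R x"
    and smono: "\<And>i. i \<ge> 1 \<Longrightarrow> (s (Suc i))\<^sup>2 \<le> (s i)\<^sup>2"
    and u: "orthonormal_on {1..n} u" and v: "orthonormal_on {1..n} v"
    and T: "\<And>x. T x = (\<Sum>l=1..n. \<sigma> l *\<^sub>R tens (u l) (v l) x)"
    and \<sigma>mono: "\<And>l. 1 \<le> l \<Longrightarrow> l < n \<Longrightarrow> \<bar>\<sigma> (Suc l)\<bar> \<le> \<bar>\<sigma> l\<bar>"
    and close: "\<And>x. norm (R x - T x) \<le> e * norm x"
    and Rb: "\<And>x. norm (R x) \<le> norm x" and Tb: "\<And>x. norm (T x) \<le> norm x"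
    and e0: "e \<ge> 0"
begin

lemma lam_mono: "1 \<le> i \<Longrightarrow> i \<le> k \<Longrightarrow> (s k)\<^sup>2 \<le> (s i)\<^sup>2"
  using antimono_from[of 1 "k" "\<lambda>i. (s i)\<^sup>2" i k] smono by auto

lemma mu_mono: "1 \<le> i \<Longrightarrow> i \<le> k \<Longrightarrow> k \<le> n \<Longrightarrow> (\<sigma> k)\<^sup>2 \<le> (\<sigma> i)\<^sup>2"
proof -
  assume a: "1 \<le> i" "i \<le> k" "k \<le> n"
  have "\<bar>\<sigma> k\<bar> \<le> \<bar>\<sigma> i\<bar>"
    using antimono_from[of 1 n "\<lambda>i. \<bar>\<sigma> i\<bar>" i k] \<sigma>mono a by auto
  then show ?thesis by (metis abs_ge_zero power2_abs power_mono)
qed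

lemma fc: "\<bar>inner (R x) (R y) - inner (T x) (T y)\<bar> \<le> 2 * e * norm x * norm y"
  by (rule form_close[OF close Rb Tb])

lemma RR: "(\<lambda>i. (s (Suc i))\<^sup>2 * inner (p (Suc i)) x * inner (p (Suc i)) y) sums inner (R x) (R y)"
  by (rule ser_inner2[OF q Rs])

lemma TT: "inner (T x) (T y) = (\<Sum>l=1..n. (\<sigma> l)\<^sup>2 * inner (u l) x * inner (u l) y)"
  by (rule fin_inner2[OF u v T])

lemma weyl_a:
  assumes j: "1 \<le> j" "j \<le> n"
  shows "(s j)\<^sup>2 - 2 * e \<le> (\<sigma> j)\<^sup>2"
proof -
  obtain d where d1: "(\<Sum>i=1..j. (d i)\<^sup>2) = 1"
    and dorth: "\<And>l. l \<in> {1..<j} \<Longrightarrow> inner (\<Sum>i=1..j. d i *\<^sub>R p i) (u l) = 0"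
    using exists_orth_vec[OF p, of j u] j by auto
  define h where "h = (\<Sum>i=1..j. d i *\<^sub>R p i)"
  have nh: "norm h = 1"
    using orth_sum_norm2[OF p, of "{1..j}" d] d1 unfolding h_def by (intro norm_sq1) (simp add: subset_eq)
  have ph: "inner (p i) h = (if i \<in> {1..j} then d i else 0)" if "i \<ge> 1" for i
    using orth_sum_inner[OF p, of "{1..j}" i d] that unfolding h_def by (simp add: inner_commute subset_eq)
  have "inner (T h) (T h) = (\<Sum>l=1..n. (\<sigma> l)\<^sup>2 * (inner (u l) h)\<^sup>2)"
    by (simp add: TT power2_eq_square mult.assoc)
  also have "\<dots> \<le> (\<Sum>l=1..n. (\<sigma> j)\<^sup>2 * (inner (u l) h)\<^sup>2)"
  proof (intro sum_mono)
    fix l assume l: "l \<in> {1..n}"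
    show "(\<sigma> l)\<^sup>2 * (inner (u l) h)\<^sup>2 \<le> (\<sigma> j)\<^sup>2 * (inner (u l) h)\<^sup>2"
    proof (cases "l < j")
      case True
      then have "inner (u l) h = 0" using dorth[of l] l by (simp add: h_def inner_commute)
      then show ?thesis by simp
    next
      case False
      then show ?thesis using mu_mono[of j l] j l by (intro mult_right_mono) auto
    qed
  qed
  also have "\<dots> = (\<sigma> j)\<^sup>2 * (\<Sum>l=1..n. (inner (u l) h)\<^sup>2)" by (simp add: sum_distrib_left)
  also have "\<dots> \<le> (\<sigma> j)\<^sup>2 * (norm h)\<^sup>2"
    by (intro mult_left_mono bessel_fin[OF u]) auto
  finally have Th: "inner (T h) (T h) \<le> (\<sigma> j)\<^sup>2" using nh by simp
  have "(\<lambda>i. (s (Suc i))\<^sup>2 * inner (p (Suc i)) h * inner (p (Suc i)) h) sums inner (R h) (R h)" by (rule RR)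
  moreover have "(\<lambda>i. (s (Suc i))\<^sup>2 * inner (p (Suc i)) h * inner (p (Suc i)) h) sums
      (\<Sum>i\<in>{..<j}. (s (Suc i))\<^sup>2 * inner (p (Suc i)) h * inner (p (Suc i)) h)"
    by (rule sums_finite) (auto simp: ph)
  ultimately have "inner (R h) (R h) = (\<Sum>i<j. (s (Suc i))\<^sup>2 * inner (p (Suc i)) h * inner (p (Suc i)) h)"
    by (rule sums_unique2)
  also have "\<dots> = (\<Sum>i<j. (s (Suc i))\<^sup>2 * (d (Suc i))\<^sup>2)"
    by (intro sum.cong refl) (auto simp: ph power2_eq_square)
  finally have Rh: "inner (R h) (R h) = (\<Sum>i<j. (s (Suc i))\<^sup>2 * (d (Suc i))\<^sup>2)" .
  have "(s j)\<^sup>2 = (s j)\<^sup>2 * (\<Sum>i<j. (d (Suc i))\<^sup>2)"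
    using d1 by (simp add: sum.atLeast1_atMost_eq)
  also have "\<dots> \<le> (\<Sum>i<j. (s (Suc i))\<^sup>2 * (d (Suc i))\<^sup>2)"
    unfolding sum_distrib_left by (intro sum_mono mult_right_mono lam_mono) auto
  finally have "(s j)\<^sup>2 \<le> inner (R h) (R h)" using Rh by simp
  moreover have "inner (R h) (R h) - inner (T h) (T h) \<le> 2 * e"
    using fc[of h h] nh by simp
  ultimately show ?thesis using Th by linarith
qed

lemma weyl_b:
  assumes j: "1 \<le> j" "j \<le> n"
  shows "(\<sigma> j)\<^sup>2 \<le> (s j)\<^sup>2 + 2 * e"
proof -
  obtain d where d1: "(\<Sum>i=1..j. (d i)\<^sup>2) = 1"
    and dorth: "\<And>l. l \<in> {1..<j} \<Longrightarrow> inner (\<Sum>i=1..j. d i *\<^sub>R u i) (p l) = 0"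
    using exists_orth_vec[OF u, of j p] j by auto
  define h where "h = (\<Sum>i=1..j. d i *\<^sub>R u i)"
  have sub: "{1..j} \<subseteq> {1..n}" using j by auto
  have nh: "norm h = 1"
    using orth_sum_norm2[OF u _ sub, of d] d1 unfolding h_def by (intro norm_sq1) simp
  have uh: "inner (u l) h = (if l \<in> {1..j} then d l else 0)" if "l \<in> {1..n}" for l
    using orth_sum_inner[OF u _ sub that, of d] unfolding h_def by (simp add: inner_commute)
  have "inner (T h) (T h) = (\<Sum>l=1..n. (\<sigma> l)\<^sup>2 * (inner (u l) h)\<^sup>2)"
    by (simp add: TT power2_eq_square mult.assoc)
  also have "\<dots> = (\<Sum>l=1..j. (\<sigma> l)\<^sup>2 * (d l)\<^sup>2)"
  proof -
    have "(\<Sum>l=1..n. (\<sigma> l)\<^sup>2 * (inner (u l) h)\<^sup>2) = (\<Sum>l\<in>{1..n}. if l \<in> {1..j} then (\<sigma> l)\<^sup>2 * (d l)\<^sup>2 else 0)"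
      by (intro sum.cong) (auto simp: uh)
    also have "\<dots> = (\<Sum>l\<in>{1..j}. (\<sigma> l)\<^sup>2 * (d l)\<^sup>2)"
      by (rule sum.mono_neutral_cong_right) (use sub in auto)
    finally show ?thesis .
  qed
  also have "\<dots> \<ge> (\<Sum>l=1..j. (\<sigma> j)\<^sup>2 * (d l)\<^sup>2)"
    by (intro sum_mono mult_right_mono mu_mono) (use j in auto)
  finally have Th: "(\<sigma> j)\<^sup>2 \<le> inner (T h) (T h)"
    using d1 by (simp add: sum_distrib_left[symmetric])
  have ph0: "inner (p i) h = 0" if "1 \<le> i" "i < j" for i
    using dorth[of i] that by (simp add: h_def inner_commute)
  have bs: "summable (\<lambda>i. (inner (p (Suc i)) h)\<^sup>2)" "(\<Sum>i. (inner (p (Suc i)) h)\<^sup>2) \<le> (norm h)\<^sup>2"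
    using bessel_summable[OF p, of h] by auto
  have le: "(s (Suc i))\<^sup>2 * inner (p (Suc i)) h * inner (p (Suc i)) h \<le> (s j)\<^sup>2 * (inner (p (Suc i)) h)\<^sup>2" for i
  proof (cases "Suc i < j")
    case True then show ?thesis using ph0[of "Suc i"] by simp
  next
    case False
    then have "(s (Suc i))\<^sup>2 \<le> (s j)\<^sup>2" using lam_mono[of j "Suc i"] j by auto
    then show ?thesis by (metis mult.assoc mult_right_mono zero_le_square power2_eq_square)
  qed
  have "inner (R h) (R h) \<le> (\<Sum>i. (s j)\<^sup>2 * (inner (p (Suc i)) h)\<^sup>2)"
    by (rule sums_le[OF le RR]) (intro summable_sums summable_mult bs(1))
  also have "\<dots> = (s j)\<^sup>2 * (\<Sum>i. (inner (p (Suc i)) h)\<^sup>2)"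
    by (rule suminf_mult[OF bs(1)])
  also have "\<dots> \<le> (s j)\<^sup>2"
    using bs(2) nh by (intro mult_left_le) auto
  finally have Rh: "inner (R h) (R h) \<le> (s j)\<^sup>2" .
  have "inner (T h) (T h) - inner (R h) (R h) \<le> 2 * e"
    using fc[of h h] nh by simp
  then show ?thesis using Th Rh by linarith
qed

end

lemma two_le_aux: "(a::real) \<le> X \<Longrightarrow> (b::real) \<le> X \<Longrightarrow> 2 * (a + b) \<le> 2 * (2 * X)" by simp

lemma sgn01_sq: "(sgn01 a)\<^sup>2 = 1" by (simp add: sgn01_def)
lemma sgn01_mul: "sgn01 a * a = \<bar>a\<bar>" by (simp add: sgn01_def)

context svp begin

lemma svec:
  assumes j: "1 \<le> j" "j \<le> n"
    and gap1: "(s j)\<^sup>2 - (s (Suc j))\<^sup>2 \<ge> g"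
    and gap2: "j \<ge> 2 \<Longrightarrow> (s (j - 1))\<^sup>2 - (s j)\<^sup>2 \<ge> g"
    and ge: "2 * e < g"
  shows "norm (u j - sgn01 (inner (u j) (p j)) *\<^sub>R p j) \<le> 4 * e / (g - 2 * e)"
proof -
  define \<delta> where "\<delta> = 2 * e"
  define m where "m = g - \<delta>"
  have m0: "m > 0" using ge by (simp add: m_def \<delta>_def)
  define \<mu> where "\<mu> = (\<sigma> j)\<^sup>2"
  define c where "c i = inner (p i) (u j)" for i
  define F where "F g0 = inner (R (u j)) (R g0) - \<mu> * inner (u j) g0" for g0
  have jn: "j \<in> {1..n}" using j by auto
  have nu: "norm (u j) = 1"
    using orth_inner[OF u jn jn] by (simp add: norm_eq_sqrt_inner)
  have Tu: "inner (T (u j)) (T g0) = \<mu> * inner (u j) g0" for g0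
  proof -
    have "inner (T (u j)) (T g0) = (\<Sum>l\<in>{1..n}. if l = j then \<mu> * inner (u j) g0 else 0)"
      unfolding TT by (intro sum.cong refl) (auto simp: orth_inner[OF u _ jn] jn \<mu>_def inner_commute)
    also have "\<dots> = \<mu> * inner (u j) g0" using jn by simp
    finally show ?thesis .
  qed
  have Fb: "\<bar>F g0\<bar> \<le> \<delta> * norm g0" for g0
    using fc[of "u j" g0] nu unfolding F_def \<delta>_def Tu by simp
  have wa: "(s j)\<^sup>2 - \<delta> \<le> \<mu>" using weyl_a[OF j] by (simp add: \<mu>_def \<delta>_def)
  have wb: "\<mu> \<le> (s j)\<^sup>2 + \<delta>" using weyl_b[OF j] by (simp add: \<mu>_def \<delta>_def)
  define K where "K = {1..<j}"
  define a where "a = (\<Sum>k\<in>K. (c k)\<^sup>2)"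
  define P where "P = (\<Sum>k\<in>K. c k *\<^sub>R p k)"
  have Ksub: "K \<subseteq> {1..}" by (auto simp: K_def)
  have fK: "finite K" by (simp add: K_def)
  have nP: "(norm P)\<^sup>2 = a" unfolding P_def a_def by (rule orth_sum_norm2[OF p fK Ksub])
  have a0: "a \<ge> 0" unfolding a_def by (intro sum_nonneg) auto
  have uP: "inner (u j) P = a"
    unfolding P_def a_def by (simp add: inner_sum_right c_def inner_commute power2_eq_square)
  have pP: "inner (p i) P = (if i \<in> K then c i else 0)" if "i \<ge> 1" for i
    using orth_sum_inner[OF p fK Ksub, of i c] that unfolding P_def by (simp add: inner_commute)
  define N where "N = {i. Suc i < j}"
  have fN: "finite N" unfolding N_def by (rule finite_subset[of _ "{..<j}"]) auto
  have KN: "K = Suc ` N"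
  proof
    show "Suc ` N \<subseteq> K" by (auto simp: K_def N_def)
    show "K \<subseteq> Suc ` N"
    proof
      fix k assume "k \<in> K"
      then have "k = Suc (k - 1)" "Suc (k - 1) < j" by (auto simp: K_def)
      then show "k \<in> Suc ` N" unfolding N_def by (metis (mono_tags) image_eqI mem_Collect_eq)
    qed
  qed
  have "(\<lambda>i. (s (Suc i))\<^sup>2 * inner (p (Suc i)) (u j) * inner (p (Suc i)) P) sums inner (R (u j)) (R P)" by (rule RR)
  moreover have "(\<lambda>i. (s (Suc i))\<^sup>2 * inner (p (Suc i)) (u j) * inner (p (Suc i)) P) sums
      (\<Sum>i\<in>N. (s (Suc i))\<^sup>2 * inner (p (Suc i)) (u j) * inner (p (Suc i)) P)"
    by (rule sums_finite[OF fN]) (auto simp: pP K_def N_def)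
  ultimately have "inner (R (u j)) (R P) = (\<Sum>i\<in>N. (s (Suc i))\<^sup>2 * inner (p (Suc i)) (u j) * inner (p (Suc i)) P)"
    by (rule sums_unique2)
  also have "\<dots> = (\<Sum>i\<in>N. (s (Suc i))\<^sup>2 * (c (Suc i))\<^sup>2)"
    by (intro sum.cong refl) (simp add: pP N_def K_def c_def power2_eq_square)
  also have "\<dots> = (\<Sum>k\<in>K. (s k)\<^sup>2 * (c k)\<^sup>2)"
    unfolding KN by (simp add: sum.reindex)
  finally have RP: "inner (R (u j)) (R P) = (\<Sum>k\<in>K. (s k)\<^sup>2 * (c k)\<^sup>2)" .
  have FP: "F P = (\<Sum>k\<in>K. ((s k)\<^sup>2 - \<mu>) * (c k)\<^sup>2)"
    unfolding F_def RP uP a_def by (simp add: sum_distrib_left left_diff_distrib sum_subtractf)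
  have "m * a \<le> F P"
    unfolding FP a_def sum_distrib_left
  proof (intro sum_mono mult_right_mono)
    fix k assume k: "k \<in> K"
    then have j2: "j \<ge> 2" and k1: "1 \<le> k" "k \<le> j - 1" by (auto simp: K_def)
    have "(s (j - 1))\<^sup>2 \<le> (s k)\<^sup>2" using lam_mono[of k "j - 1"] k1 by auto
    then show "m \<le> (s k)\<^sup>2 - \<mu>" using gap2[OF j2] wb by (simp add: m_def)
  qed auto
  also have "\<dots> \<le> \<delta> * sqrt a"
  proof -
    have "sqrt a = norm P" using real_sqrt_unique[OF nP] by simp
    then show ?thesis using Fb[of P] by (simp add: abs_le_iff)
  qed
  finally have aB: "a \<le> (\<delta> / m)\<^sup>2" by (rule sq_bound_aux[OF a0 m0])
  define I where "I = {1..j}"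
  have fI: "finite I" and Isub: "I \<subseteq> {1..}" by (auto simp: I_def)
  define y where "y = u j - (\<Sum>i\<in>I. c i *\<^sub>R p i)"
  define b where "b = (norm y)\<^sup>2"
  have pyth: "(norm (u j))\<^sup>2 = (\<Sum>i\<in>I. (c i)\<^sup>2) + b"
    using orth_pyth(1)[OF p fI Isub, of "u j"] unfolding b_def y_def c_def .
  have yp: "inner y (p l) = 0" if "l \<in> I" for l
    using orth_pyth(2)[OF p fI Isub that, of "u j"] unfolding y_def c_def .
  have py: "inner (p k) y = (if k \<in> I then 0 else c k)" if "k \<ge> 1" for k
  proof (cases "k \<in> I")
    case True then show ?thesis using yp[of k] by (simp add: inner_commute)
  next
    case False
    then show ?thesis using orth_sum_inner[OF p fI Isub, of k c] that
      by (simp add: y_def inner_diff_right c_def inner_commute)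
  qed
  have uy: "inner (u j) y = b"
  proof -
    have "u j = y + (\<Sum>i\<in>I. c i *\<^sub>R p i)" by (simp add: y_def)
    then have "inner (u j) y = inner y y + (\<Sum>i\<in>I. c i * inner (p i) y)"
      by (simp add: inner_add_left inner_sum_left)
    also have "(\<Sum>i\<in>I. c i * inner (p i) y) = 0"
      by (intro sum.neutral) (auto simp: py I_def)
    finally show ?thesis by (simp add: b_def power2_norm_eq_inner)
  qed
  have b0: "b \<ge> 0" by (simp add: b_def)
  have bs: "summable (\<lambda>i. (inner (p (Suc i)) y)\<^sup>2)" "(\<Sum>i. (inner (p (Suc i)) y)\<^sup>2) \<le> (norm y)\<^sup>2"
    using bessel_summable[OF p, of y] by auto
  have le: "(s (Suc i))\<^sup>2 * inner (p (Suc i)) (u j) * inner (p (Suc i)) y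
      \<le> (s (Suc j))\<^sup>2 * (inner (p (Suc i)) y)\<^sup>2" for i
  proof (cases "Suc i \<in> I")
    case True then show ?thesis using py[of "Suc i"] by simp
  next
    case False
    then have "Suc j \<le> Suc i" by (auto simp: I_def)
    then have "(s (Suc i))\<^sup>2 \<le> (s (Suc j))\<^sup>2" using lam_mono[of "Suc j" "Suc i"] by auto
    moreover have "inner (p (Suc i)) (u j) = inner (p (Suc i)) y" using py[of "Suc i"] False by (simp add: c_def)
    ultimately show ?thesis by (metis mult.assoc mult_right_mono zero_le_square power2_eq_square)
  qed
  have "inner (R (u j)) (R y) \<le> (\<Sum>i. (s (Suc j))\<^sup>2 * (inner (p (Suc i)) y)\<^sup>2)"
    by (rule sums_le[OF le RR]) (intro summable_sums summable_mult bs(1))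
  also have "\<dots> = (s (Suc j))\<^sup>2 * (\<Sum>i. (inner (p (Suc i)) y)\<^sup>2)"
    by (rule suminf_mult[OF bs(1)])
  also have "\<dots> \<le> (s (Suc j))\<^sup>2 * b"
    using bs(2) by (intro mult_left_mono) (auto simp: b_def)
  finally have Ry: "inner (R (u j)) (R y) \<le> (s (Suc j))\<^sup>2 * b" .
  have "m * b \<le> - F y"
  proof -
    have "m \<le> \<mu> - (s (Suc j))\<^sup>2" using gap1 wa by (simp add: m_def)
    then have "m * b \<le> (\<mu> - (s (Suc j))\<^sup>2) * b" using b0 by (rule mult_right_mono)
    then show ?thesis using Ry unfolding F_def uy by (simp add: left_diff_distrib)
  qed
  also have "\<dots> \<le> \<delta> * sqrt b"
  proof -
    have "sqrt b = norm y" unfolding b_def by simp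
    then show ?thesis using Fb[of y] by (simp add: abs_le_iff)
  qed
  finally have bB: "b \<le> (\<delta> / m)\<^sup>2" by (rule sq_bound_aux[OF b0 m0])
  have IK: "I = insert j K" using j by (auto simp: I_def K_def)
  have "(\<Sum>i\<in>I. (c i)\<^sup>2) = (c j)\<^sup>2 + a" unfolding IK a_def using fK by (simp add: K_def)
  with pyth nu have one: "1 = (c j)\<^sup>2 + a + b" by simp
  have cj1: "\<bar>c j\<bar> \<le> 1"
  proof -
    have "(c j)\<^sup>2 \<le> 1" using one a0 b0 by linarith
    then show ?thesis by (simp add: abs_square_le_1)
  qed
  define t where "t = sgn01 (inner (u j) (p j))"
  have tc: "t * c j = \<bar>c j\<bar>" unfolding t_def c_def by (simp add: inner_commute sgn01_mul)
  have np: "inner (p j) (p j) = 1" using orth_inner[OF p, of j j] j by simp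
  have "(norm (u j - t *\<^sub>R p j))\<^sup>2 = inner (u j) (u j) - 2 * (t * c j) + t\<^sup>2 * inner (p j) (p j)"
  proof -
    have "inner (u j - t *\<^sub>R p j) (u j - t *\<^sub>R p j) = inner (u j) (u j) - t * inner (p j) (u j) - t * inner (u j) (p j) + t * t * inner (p j) (p j)"
      by (simp add: inner_diff_left inner_diff_right algebra_simps)
    then show ?thesis unfolding power2_norm_eq_inner c_def power2_eq_square[of t] by (simp add: inner_commute[of "u j" "p j"])
  qed
  also have "\<dots> = 2 - 2 * \<bar>c j\<bar>"
  proof -
    have uu: "inner (u j) (u j) = 1" using orth_inner[OF u jn jn] by simp
    have t2: "t\<^sup>2 = 1" by (simp add: t_def sgn01_sq)
    show ?thesis by (simp only: uu np tc t2)
  qed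
  also have "\<dots> \<le> 2 * (1 - (c j)\<^sup>2)"
  proof -
    have "(c j)\<^sup>2 = \<bar>c j\<bar> * \<bar>c j\<bar>" by (simp add: power2_eq_square)
    also have "\<dots> \<le> \<bar>c j\<bar> * 1" using cj1 by (intro mult_left_mono) auto
    finally have "(c j)\<^sup>2 \<le> \<bar>c j\<bar>" by simp
    then show ?thesis by simp
  qed
  also have "\<dots> = 2 * (a + b)"
  proof -
    have "1 - (c j)\<^sup>2 = a + b" using one by linarith
    then show ?thesis by (simp only:)
  qed
  also have "\<dots> \<le> 2 * (2 * (\<delta> / m)\<^sup>2)" by (rule two_le_aux[OF aB bB])
  also have "\<dots> = (2 * (\<delta> / m))\<^sup>2" by (simp only: power_mult_distrib) simp
  finally have sq: "(norm (u j - t *\<^sub>R p j))\<^sup>2 \<le> (2 * (\<delta> / m))\<^sup>2" .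
  have pos: "0 \<le> 2 * (\<delta> / m)" using m0 e0 unfolding \<delta>_def by simp
  have "norm (u j - t *\<^sub>R p j) \<le> 2 * (\<delta> / m)"
    by (rule power2_le_imp_le[OF sq pos])
  also have "2 * (\<delta> / m) = 4 * e / (g - 2 * e)" unfolding \<delta>_def m_def by simp
  finally show ?thesis unfolding t_def .
qed

end

lemma orth_sum_norm2_Suc:
  assumes o: "orthonormal_on {1..} p" and I: "finite I"
  shows "(norm (\<Sum>i\<in>I. d i *\<^sub>R p (Suc i)))\<^sup>2 = (\<Sum>i\<in>I. (d i)\<^sup>2)"
proof -
  have "(\<Sum>i\<in>I. d i *\<^sub>R p (Suc i)) = (\<Sum>k\<in>Suc ` I. d (k - 1) *\<^sub>R p k)"
    by (simp add: sum.reindex)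
  moreover have "(\<Sum>i\<in>I. (d i)\<^sup>2) = (\<Sum>k\<in>Suc ` I. (d (k - 1))\<^sup>2)"
    by (simp add: sum.reindex)
  moreover have "(norm (\<Sum>k\<in>Suc ` I. d (k - 1) *\<^sub>R p k))\<^sup>2 = (\<Sum>k\<in>Suc ` I. (d (k - 1))\<^sup>2)"
    by (rule orth_sum_norm2[OF o]) (use I in auto)
  ultimately show ?thesis by simp
qed

lemma ser_norm_le:
  assumes p: "orthonormal_on {1..} p" and q: "orthonormal_on {1..} q"
    and Rs: "\<And>x. (\<lambda>i. s (Suc i) *\<^sub>R tens (p (Suc i)) (q (Suc i)) x) sums R x"
    and sb: "\<And>i. i \<ge> 1 \<Longrightarrow> \<bar>s i\<bar> \<le> 1"
  shows "norm (R x) \<le> norm x"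
proof -
  have S: "(\<lambda>i. (s (Suc i))\<^sup>2 * inner (p (Suc i)) x * inner (p (Suc i)) x) sums inner (R x) (R x)"
    by (rule ser_inner2[OF q Rs])
  have bs: "summable (\<lambda>i. (inner (p (Suc i)) x)\<^sup>2)" "(\<Sum>i. (inner (p (Suc i)) x)\<^sup>2) \<le> (norm x)\<^sup>2"
    using bessel_summable[OF p, of x] by auto
  have le: "(s (Suc i))\<^sup>2 * inner (p (Suc i)) x * inner (p (Suc i)) x \<le> (inner (p (Suc i)) x)\<^sup>2" for i
  proof -
    have "(s (Suc i))\<^sup>2 \<le> 1" using sb[of "Suc i"] by (simp add: abs_square_le_1)
    then have "(s (Suc i))\<^sup>2 * (inner (p (Suc i)) x)\<^sup>2 \<le> 1 * (inner (p (Suc i)) x)\<^sup>2"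
      by (intro mult_right_mono) auto
    then show ?thesis by (simp add: power2_eq_square mult.assoc)
  qed
  have "(norm (R x))\<^sup>2 \<le> (\<Sum>i. (inner (p (Suc i)) x)\<^sup>2)"
    unfolding power2_norm_eq_inner by (rule sums_le[OF le S summable_sums[OF bs(1)]])
  also have "\<dots> \<le> (norm x)\<^sup>2" by (rule bs(2))
  finally show ?thesis by (rule power2_le_imp_le) simp
qed

lemma fin_norm_le:
  assumes u: "orthonormal_on {1..n} u" and v: "orthonormal_on {1..n} v"
    and T: "\<And>x. T x = (\<Sum>l=1..n. \<sigma> l *\<^sub>R tens (u l) (v l) x)"
    and sb: "\<And>l. l \<in> {1..n} \<Longrightarrow> \<bar>\<sigma> l\<bar> \<le> 1"
  shows "norm (T x) \<le> norm x"
proof -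
  have "(norm (T x))\<^sup>2 = (\<Sum>l=1..n. (\<sigma> l)\<^sup>2 * inner (u l) x * inner (u l) x)"
    unfolding power2_norm_eq_inner by (rule fin_inner2[OF u v T])
  also have "\<dots> \<le> (\<Sum>l=1..n. (inner (u l) x)\<^sup>2)"
  proof (intro sum_mono)
    fix l assume l: "l \<in> {1..n}"
    have "(\<sigma> l)\<^sup>2 \<le> 1" using sb[OF l] by (simp add: abs_square_le_1)
    then have "(\<sigma> l)\<^sup>2 * (inner (u l) x)\<^sup>2 \<le> 1 * (inner (u l) x)\<^sup>2"
      by (intro mult_right_mono) auto
    then show "(\<sigma> l)\<^sup>2 * inner (u l) x * inner (u l) x \<le> (inner (u l) x)\<^sup>2"
      by (simp add: power2_eq_square mult.assoc)
  qed
  also have "\<dots> \<le> (norm x)\<^sup>2" by (rule bessel_fin[OF u]) auto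
  finally show ?thesis by (rule power2_le_imp_le) simp
qed

definition adj_ser :: "(nat \<Rightarrow> real) \<Rightarrow> (nat \<Rightarrow> 'a::{real_inner,banach}) \<Rightarrow> (nat \<Rightarrow> 'a) \<Rightarrow> 'a \<Rightarrow> 'a" where
  "adj_ser s p q x = (\<Sum>i. s (Suc i) *\<^sub>R tens (q (Suc i)) (p (Suc i)) x)"

lemma adj_ser_sums:
  fixes p q :: "nat \<Rightarrow> 'a::{real_inner,banach}"
  assumes p: "orthonormal_on {1..} p" and q: "orthonormal_on {1..} q"
    and sb: "\<And>i. i \<ge> 1 \<Longrightarrow> \<bar>s i\<bar> \<le> 1"
  shows "(\<lambda>i. s (Suc i) *\<^sub>R tens (q (Suc i)) (p (Suc i)) x) sums adj_ser s p q x"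
proof -
  define c where "c i = inner (q (Suc i)) x" for i
  have cs: "summable (\<lambda>i. (c i)\<^sup>2)" using bessel_summable[OF q, of x] by (simp add: c_def)
  have "summable (\<lambda>i. s (Suc i) *\<^sub>R tens (q (Suc i)) (p (Suc i)) x)"
    unfolding summable_Cauchy
  proof (intro allI impI)
    fix r :: real assume r: "r > 0"
    then have r2: "r\<^sup>2 > 0" by simp
    from cs[unfolded summable_Cauchy, rule_format, OF r2] obtain N where
      N: "\<And>m n. m \<ge> N \<Longrightarrow> norm (\<Sum>i = m..<n. (c i)\<^sup>2) < r\<^sup>2" by blast
    show "\<exists>N. \<forall>m\<ge>N. \<forall>n. norm (\<Sum>i = m..<n. s (Suc i) *\<^sub>R tens (q (Suc i)) (p (Suc i)) x) < r"
    proof (intro exI allI impI)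
      fix m n assume m: "m \<ge> N"
      have eq: "(\<Sum>i = m..<n. s (Suc i) *\<^sub>R tens (q (Suc i)) (p (Suc i)) x)
          = (\<Sum>i = m..<n. (s (Suc i) * c i) *\<^sub>R p (Suc i))"
        by (simp add: tens_apply c_def)
      have "(norm (\<Sum>i = m..<n. (s (Suc i) * c i) *\<^sub>R p (Suc i)))\<^sup>2 = (\<Sum>i = m..<n. (s (Suc i) * c i)\<^sup>2)"
        by (rule orth_sum_norm2_Suc[OF p]) simp
      also have "\<dots> \<le> (\<Sum>i = m..<n. (c i)\<^sup>2)"
      proof (intro sum_mono)
        fix i
        have "(s (Suc i))\<^sup>2 \<le> 1" using sb[of "Suc i"] by (simp add: abs_square_le_1)
        then have "(s (Suc i))\<^sup>2 * (c i)\<^sup>2 \<le> 1 * (c i)\<^sup>2" by (intro mult_right_mono) auto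
        then show "(s (Suc i) * c i)\<^sup>2 \<le> (c i)\<^sup>2" by (simp add: power_mult_distrib)
      qed
      also have "\<dots> < r\<^sup>2" using N[OF m, of n] by simp
      finally have "(norm (\<Sum>i = m..<n. (s (Suc i) * c i) *\<^sub>R p (Suc i)))\<^sup>2 < r\<^sup>2" .
      then have "norm (\<Sum>i = m..<n. (s (Suc i) * c i) *\<^sub>R p (Suc i)) < r"
        using r by (simp add: power_less_imp_less_base)
      then show "norm (\<Sum>i = m..<n. s (Suc i) *\<^sub>R tens (q (Suc i)) (p (Suc i)) x) < r"
        by (simp only: eq)
    qed
  qed
  then show ?thesis unfolding adj_ser_def by (rule summable_sums)
qed

lemma adj_ser_inner:
  fixes p q :: "nat \<Rightarrow> 'a::{real_inner,banach}"
  assumes p: "orthonormal_on {1..} p" and q: "orthonormal_on {1..} q"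
    and sb: "\<And>i. i \<ge> 1 \<Longrightarrow> \<bar>s i\<bar> \<le> 1"
    and Rs: "\<And>x. (\<lambda>i. s (Suc i) *\<^sub>R tens (p (Suc i)) (q (Suc i)) x) sums R x"
  shows "inner (adj_ser s p q x) y = inner x (R y)"
proof -
  have a: "(\<lambda>i. inner (s (Suc i) *\<^sub>R tens (q (Suc i)) (p (Suc i)) x) y) sums inner (adj_ser s p q x) y"
    by (rule bounded_linear.sums[OF bounded_linear_inner_left adj_ser_sums[OF p q sb]])
  have b: "(\<lambda>i. inner x (s (Suc i) *\<^sub>R tens (p (Suc i)) (q (Suc i)) y)) sums inner x (R y)"
    by (rule bounded_linear.sums[OF bounded_linear_inner_right Rs])
  have "(\<lambda>i. inner (s (Suc i) *\<^sub>R tens (q (Suc i)) (p (Suc i)) x) y)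
      = (\<lambda>i. inner x (s (Suc i) *\<^sub>R tens (p (Suc i)) (q (Suc i)) y))"
    by (simp add: tens_apply inner_commute mult.commute mult.left_commute)
  with a b show ?thesis using sums_unique2 by metis
qed

lemma adj_close:
  fixes R T Rs Ts :: "'a::real_inner \<Rightarrow> 'a"
  assumes aR: "\<And>x y. inner (Rs x) y = inner x (R y)" and aT: "\<And>x y. inner (Ts x) y = inner x (T y)"
    and close: "\<And>x. norm (R x - T x) \<le> e * norm x"
  shows "norm (Rs x - Ts x) \<le> e * norm x"
proof -
  define z where "z = Rs x - Ts x"
  have "inner z z = inner (Rs x) z - inner (Ts x) z" unfolding z_def by (rule inner_diff_left)
  then have "(norm z)\<^sup>2 = inner (Rs x) z - inner (Ts x) z" by (simp only: power2_norm_eq_inner)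
  also have "\<dots> = inner x (R z - T z)" by (simp add: aR aT inner_diff_right)
  also have "\<dots> \<le> norm x * norm (R z - T z)" by (rule norm_cauchy_schwarz)
  also have "\<dots> \<le> norm x * (e * norm z)" by (intro mult_left_mono close) auto
  finally have zz: "norm z * norm z \<le> (e * norm x) * norm z" by (simp add: power2_eq_square mult_ac)
  have "norm z \<le> e * norm x"
  proof (cases "norm z = 0")
    case True
    have "0 \<le> norm (R x - T x)" by simp
    also have "\<dots> \<le> e * norm x" by (rule close)
    finally show ?thesis using True by simp
  next
    case False
    then have "norm z > 0" by simp
    with zz show ?thesis by (rule mult_right_le_imp_le)
  qed
  then show ?thesis by (simp add: z_def)
qed

lemma fin_adj:
  assumes T: "\<And>x. T x = (\<Sum>l=1..n. \<sigma> l *\<^sub>R tens (u l) (v l) x)"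
  shows "inner (\<Sum>l=1..n. \<sigma> l *\<^sub>R tens (v l) (u l) x) y = inner x (T y)"
  unfolding T tens_apply inner_sum_left inner_sum_right
  by (intro sum.cong refl) (simp add: inner_commute)

lemma limit_lemma:
  fixes e L f Mn :: "nat \<Rightarrow> real"
  assumes e0: "\<And>n. e n \<ge> 0"
    and Lpos: "eventually (\<lambda>n. L n > 0) sequentially"
    and eO: "e \<in> O(Mn)" and Lo: "L \<in> o(\<lambda>n. 1 / Mn n)"
    and fb: "eventually (\<lambda>n. L n > 0 \<longrightarrow> 2 * e n < 1 / L n \<longrightarrow>
                 0 \<le> f n \<and> f n \<le> 4 * e n / (1 / L n - 2 * e n)) sequentially"
  shows "f \<longlonglongrightarrow> 0"
proof -
  obtain c where c: "c > 0" "eventually (\<lambda>n. norm (e n) \<le> c * norm (Mn n)) sequentially"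
    using landau_o.bigE[OF eO] by blast
  define x where "x n = e n * L n" for n
  have x0: "x \<longlonglongrightarrow> 0"
  proof (rule tendstoI)
    fix \<epsilon> :: real assume \<epsilon>: "\<epsilon> > 0"
    have "eventually (\<lambda>n. norm (L n) \<le> (\<epsilon> / 2 / c) * norm (1 / Mn n)) sequentially"
      by (rule landau_o.smallD[OF Lo]) (use \<epsilon> c in simp)
    then show "eventually (\<lambda>n. dist (x n) 0 < \<epsilon>) sequentially"
      using c(2) Lpos
    proof eventually_elim
      case (elim n)
      have en: "e n \<le> c * \<bar>Mn n\<bar>" using elim(2) e0[of n] by simp
      have Ln: "L n \<le> (\<epsilon> / 2 / c) * \<bar>1 / Mn n\<bar>" using elim(1,3) by simp
      have "x n \<le> (c * \<bar>Mn n\<bar>) * ((\<epsilon> / 2 / c) * \<bar>1 / Mn n\<bar>)"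
        unfolding x_def using en Ln e0[of n] elim(3) by (intro mult_mono) auto
      also have "\<dots> \<le> \<epsilon> / 2"
        using c(1) \<epsilon> by (cases "Mn n = 0") (auto simp: abs_mult field_simps)
      finally have "x n \<le> \<epsilon> / 2" .
      moreover have "x n \<ge> 0" unfolding x_def using e0[of n] elim(3) by simp
      ultimately show ?case using \<epsilon> by simp
    qed
  qed
  define B where "B n = 4 * x n / (1 - 2 * x n)" for n
  have B0: "B \<longlonglongrightarrow> 0"
  proof -
    have "(\<lambda>n. 4 * x n / (1 - 2 * x n)) \<longlonglongrightarrow> 4 * 0 / (1 - 2 * 0)"
      by (intro tendsto_intros x0) simp
    moreover have "B = (\<lambda>n. 4 * x n / (1 - 2 * x n))" by (rule ext) (simp add: B_def)
    ultimately show ?thesis by simp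
  qed
  have small: "eventually (\<lambda>n. x n < 1 / 4) sequentially"
    using x0 by (rule order_tendstoD) simp
  have ev: "eventually (\<lambda>n. 0 \<le> f n \<and> f n \<le> B n) sequentially"
    using fb small Lpos
  proof eventually_elim
    case (elim n)
    have Ln: "L n > 0" using elim by simp
    have "2 * e n * L n < 1" using elim(2) by (simp add: x_def)
    then have lt: "2 * e n < 1 / L n" using Ln by (simp add: field_simps)
    have "4 * e n / (1 / L n - 2 * e n) = B n"
      using Ln elim(2) by (simp add: B_def x_def field_simps)
    then show ?case using elim(1) Ln lt by auto
  qed
  show ?thesis
    by (rule tendsto_sandwich[OF _ _ tendsto_const B0]) (use ev in \<open>auto elim: eventually_mono\<close>)
qed

lemma blin_fin: "bounded_linear (\<lambda>x. \<Sum>l\<in>S. c l *\<^sub>R tens (a l) (b l) x)"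
  unfolding tens_def by (intro bounded_linear_intros)

lemma gap_from_Lambda:
  fixes lam :: "nat \<Rightarrow> real"
  assumes gp: "\<And>l. l \<ge> 1 \<Longrightarrow> lam (Suc l) < lam l" and k: "k \<ge> 1"
  shows "Lambda_gap lam k > 0" "\<And>l. l \<in> {1..k} \<Longrightarrow> lam l - lam (Suc l) \<ge> 1 / Lambda_gap lam k"
proof -
  define S where "S = (\<lambda>j. 1 / (lam j - lam (Suc j))) ` {1..k}"
  have fS: "finite S" and neS: "S \<noteq> {}" using k by (auto simp: S_def)
  have LS: "Lambda_gap lam k = Max S" by (simp add: Lambda_gap_def S_def)
  have le: "1 / (lam l - lam (Suc l)) \<le> Lambda_gap lam k" if "l \<in> {1..k}" for l
    unfolding LS using that by (intro Max_ge fS) (auto simp: S_def)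
  have pos: "1 / (lam l - lam (Suc l)) > 0" if "l \<ge> 1" for l using gp[OF that] by simp
  have "1 \<in> {1..k}" using k by simp
  from order.strict_trans2[OF pos[of 1] le[OF this]]
  show L0: "Lambda_gap lam k > 0" by simp
  fix l assume l: "l \<in> {1..k}"
  have g0: "lam l - lam (Suc l) > 0" using gp[of l] l by simp
  show "lam l - lam (Suc l) \<ge> 1 / Lambda_gap lam k"
    using le[OF l] g0 L0 by (simp add: field_simps)
qed

lemma sup_bounds:
  fixes s \<sigma> :: "nat \<Rightarrow> real"
  assumes mono_s: "\<And>j. j \<ge> 1 \<Longrightarrow> \<bar>s (Suc j)\<bar> \<le> \<bar>s j\<bar>"
    and A: "(SUP j\<in>{1..}. \<bar>s j\<bar>) + (SUP j\<in>{1..n}. \<bar>\<sigma> j\<bar>) \<le> 1" and n: "n \<ge> 1"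
  shows "\<And>i. i \<ge> 1 \<Longrightarrow> \<bar>s i\<bar> \<le> 1" "\<And>l. l \<in> {1..n} \<Longrightarrow> \<bar>\<sigma> l\<bar> \<le> 1"
proof -
  have sb1: "\<bar>s i\<bar> \<le> \<bar>s 1\<bar>" if "i \<ge> 1" for i
    using antimono_from[of 1 i "\<lambda>j. \<bar>s j\<bar>" 1 i] mono_s that by auto
  have bdd1: "bdd_above ((\<lambda>j. \<bar>s j\<bar>) ` {1..})"
    by (rule bdd_aboveI[of _ "\<bar>s 1\<bar>"]) (use sb1 in force)
  have bdd2: "bdd_above ((\<lambda>j. \<bar>\<sigma> j\<bar>) ` {1..n})" by (intro bdd_above_finite) auto
  have S1: "\<bar>s i\<bar> \<le> (SUP j\<in>{1..}. \<bar>s j\<bar>)" if "i \<ge> 1" for i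
    by (rule cSUP_upper[OF _ bdd1]) (use that in auto)
  have S2: "\<bar>\<sigma> l\<bar> \<le> (SUP j\<in>{1..n}. \<bar>\<sigma> j\<bar>)" if "l \<in> {1..n}" for l
    by (rule cSUP_upper[OF that bdd2])
  have S10: "0 \<le> (SUP j\<in>{1..}. \<bar>s j\<bar>)" using S1[of 1] by linarith
  have S20: "0 \<le> (SUP j\<in>{1..n}. \<bar>\<sigma> j\<bar>)" using S2[of 1] n by fastforce
  show "\<bar>s i\<bar> \<le> 1" if "i \<ge> 1" for i using S1[OF that] S20 A by linarith
  show "\<bar>\<sigma> l\<bar> \<le> 1" if "l \<in> {1..n}" for l using S2[OF that] S10 A by linarith
qed

lemma both_bounds:
  fixes \<rho> T :: "'a::{real_inner,banach} \<Rightarrow> 'a" and \<psi> \<psi>t u v :: "nat \<Rightarrow> 'a"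
  assumes psi: "orthonormal_on {1..} \<psi>" and psit: "orthonormal_on {1..} \<psi>t"
    and Rs: "\<And>x. (\<lambda>i. s (Suc i) *\<^sub>R tens (\<psi> (Suc i)) (\<psi>t (Suc i)) x) sums \<rho> x"
    and smono: "\<And>i. i \<ge> 1 \<Longrightarrow> (s (Suc i))\<^sup>2 \<le> (s i)\<^sup>2"
    and sb: "\<And>i. i \<ge> 1 \<Longrightarrow> \<bar>s i\<bar> \<le> 1"
    and u: "orthonormal_on {1..n} u" and v: "orthonormal_on {1..n} v"
    and T: "\<And>x. T x = (\<Sum>l=1..n. \<sigma> l *\<^sub>R tens (u l) (v l) x)"
    and \<sigma>mono: "\<And>l. 1 \<le> l \<Longrightarrow> l < n \<Longrightarrow> \<bar>\<sigma> (Suc l)\<bar> \<le> \<bar>\<sigma> l\<bar>"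
    and \<sigma>b: "\<And>l. l \<in> {1..n} \<Longrightarrow> \<bar>\<sigma> l\<bar> \<le> 1"
    and close: "\<And>x. norm (T x - \<rho> x) \<le> e * norm x" and e0: "e \<ge> 0"
    and j: "1 \<le> j" "j \<le> n"
    and gap1: "(s j)\<^sup>2 - (s (Suc j))\<^sup>2 \<ge> g"
    and gap2: "j \<ge> 2 \<Longrightarrow> (s (j - 1))\<^sup>2 - (s j)\<^sup>2 \<ge> g"
    and ge: "2 * e < g"
  shows "norm (u j - sgn01 (inner (u j) (\<psi> j)) *\<^sub>R \<psi> j) \<le> 4 * e / (g - 2 * e)"
    and "norm (v j - sgn01 (inner (v j) (\<psi>t j)) *\<^sub>R \<psi>t j) \<le> 4 * e / (g - 2 * e)"
proof -
  have close': "norm (\<rho> x - T x) \<le> e * norm x" for x using close[of x] by (simp add: norm_minus_commute)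
  interpret A: svp \<rho> T \<psi> \<psi>t u v s \<sigma> n e
    by (unfold_locales; use psi psit Rs smono u v T \<sigma>mono close' e0
        ser_norm_le[OF psi psit Rs sb] fin_norm_le[OF u v T \<sigma>b] in auto)
  show "norm (u j - sgn01 (inner (u j) (\<psi> j)) *\<^sub>R \<psi> j) \<le> 4 * e / (g - 2 * e)"
    by (rule A.svec[OF j gap1 gap2 ge])
  define Ts where "Ts x = (\<Sum>l=1..n. \<sigma> l *\<^sub>R tens (v l) (u l) x)" for x
  define Rst where "Rst = adj_ser s \<psi> \<psi>t"
  have Rst_s: "(\<lambda>i. s (Suc i) *\<^sub>R tens (\<psi>t (Suc i)) (\<psi> (Suc i)) x) sums Rst x" for x
    unfolding Rst_def by (rule adj_ser_sums[OF psi psit sb])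
  have aR: "inner (Rst x) y = inner x (\<rho> y)" for x y
    unfolding Rst_def by (rule adj_ser_inner[OF psi psit sb Rs])
  have aT: "inner (Ts x) y = inner x (T y)" for x y
    unfolding Ts_def by (rule fin_adj[OF T])
  have closeS: "norm (Rst x - Ts x) \<le> e * norm x" for x
    by (rule adj_close[OF aR aT close'])
  interpret B: svp Rst Ts \<psi>t \<psi> v u s \<sigma> n e
    by (unfold_locales; use psi psit Rst_s smono u v \<sigma>mono closeS e0 Ts_def
        ser_norm_le[OF psit psi Rst_s sb] fin_norm_le[OF v u Ts_def \<sigma>b] in auto)
  show "norm (v j - sgn01 (inner (v j) (\<psi>t j)) *\<^sub>R \<psi>t j) \<le> 4 * e / (g - 2 * e)"
    by (rule B.svec[OF j gap1 gap2 ge])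
qed

theorem lemma2:
  fixes M :: "'w measure"
    and X eps :: "int \<Rightarrow> 'w \<Rightarrow> 'a::{real_inner, banach, second_countable_topology}"
    and \<rho> :: "'a \<Rightarrow> 'a"
    and k :: "nat \<Rightarrow> nat"
    and \<beta> :: real
    and Mn :: "nat \<Rightarrow> real"
    and C :: "nat \<Rightarrow> real" and \<phi> :: "nat \<Rightarrow> 'a"
    and Cn :: "nat \<Rightarrow> nat \<Rightarrow> 'w \<Rightarrow> real" and \<phi>n :: "nat \<Rightarrow> nat \<Rightarrow> 'w \<Rightarrow> 'a"
    and \<rho>s :: "nat \<Rightarrow> real" and \<psi> \<psi>t :: "nat \<Rightarrow> 'a"
    and \<rho>h :: "nat \<Rightarrow> nat \<Rightarrow> 'w \<Rightarrow> real" and \<psi>n \<psi>tn :: "nat \<Rightarrow> nat \<Rightarrow> 'w \<Rightarrow> 'a"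
    and M0 \<sigma>2 :: real
  assumes prob: "prob_space M"
  (* the ARH(1) model *)
    and rho_lin: "bounded_linear \<rho>"
    and rho_pow: "\<exists>k0. \<forall>j\<ge>k0. onorm (\<rho> ^^ j) < 1"
    and X_meas: "\<And>n. X n \<in> borel_measurable M"
    and eps_meas: "\<And>n. eps n \<in> borel_measurable M"
    and ARH: "\<And>n \<omega>. \<omega> \<in> space M \<Longrightarrow> X n \<omega> = \<rho> (X (n - 1) \<omega>) + eps n \<omega>"
    (* strong white noise: i.i.d., zero mean, finite positive second moment *)
    and eps_indep: "prob_space.indep_vars M (\<lambda>_. borel) eps UNIV"
    and eps_ident: "\<And>n. distr M borel (eps n) = distr M borel (eps 0)"
    and eps_mean: "integral\<^sup>L M (eps 0) = 0"
    and eps_sq: "integrable M (\<lambda>\<omega>. (norm (eps 0 \<omega>))\<^sup>2)"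
    and eps_var: "integral\<^sup>L M (\<lambda>\<omega>. (norm (eps 0 \<omega>))\<^sup>2) = \<sigma>2" "\<sigma>2 > 0"
    (* noise uncorrelated with the past of the process *)
    and eps_uncorr: "\<And>m n f g. m < n \<Longrightarrow>
        integral\<^sup>L M (\<lambda>\<omega>. inner (X m \<omega>) f * inner (eps n \<omega>) g) = 0"
    (* X zero-mean and (strictly) stationary *)
    and X_mean: "\<And>n. integral\<^sup>L M (X n) = 0"
    and X_stat: "\<And>h. distr M (PiM UNIV (\<lambda>_::int. borel)) (\<lambda>\<omega> i. X (i + h) \<omega>)
                    = distr M (PiM UNIV (\<lambda>_::int. borel)) (\<lambda>\<omega> i. X i \<omega>)"
  (* spectral decomposition of C_X = E[X_0 \<otimes> X_0] *)
    and C_mono: "\<And>j. j \<ge> 1 \<Longrightarrow> C (Suc j) \<le> C j"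
    and phi_on: "orthonormal_on {1..} \<phi>"
    and CX_spec: "\<And>f. (\<lambda>j. C (Suc j) *\<^sub>R tens (\<phi> (Suc j)) (\<phi> (Suc j)) f) sums
                       op_expect M (\<lambda>\<omega>. tens (X 0 \<omega>) (X 0 \<omega>)) f"
    and C_gap: "\<And>j. j \<ge> 1 \<Longrightarrow> C (Suc j) < C j"
  (* eigen-decomposition of the empirical covariance C_n *)
    and Cn_mono: "\<And>n j \<omega>. \<omega> \<in> space M \<Longrightarrow> 1 \<le> j \<Longrightarrow> j < n \<Longrightarrow> Cn n (Suc j) \<omega> \<le> Cn n j \<omega>"
    and Cn_nonneg: "\<And>n j \<omega>. \<omega> \<in> space M \<Longrightarrow> 1 \<le> j \<Longrightarrow> j \<le> n \<Longrightarrow> 0 \<le> Cn n j \<omega>"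
    and Cn_zero: "\<And>n j \<omega>. \<omega> \<in> space M \<Longrightarrow> n < j \<Longrightarrow> Cn n j \<omega> = 0"
    and phin_on: "\<And>n \<omega>. \<omega> \<in> space M \<Longrightarrow> orthonormal_on {1..n} (\<lambda>j. \<phi>n n j \<omega>)"
    and Cn_spec: "\<And>n \<omega> f. \<omega> \<in> space M \<Longrightarrow>
        emp_C X n \<omega> f = (\<Sum>j=1..n. Cn n j \<omega> *\<^sub>R tens (\<phi>n n j \<omega>) (\<phi>n n j \<omega>) f)"
  (* SVD of \<rho> *)
    and rho_sv_mono: "\<And>j. j \<ge> 1 \<Longrightarrow> \<bar>\<rho>s (Suc j)\<bar> \<le> \<bar>\<rho>s j\<bar>"
    and psi_on: "orthonormal_on {1..} \<psi>"
    and psit_on: "orthonormal_on {1..} \<psi>t"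
    and rho_svd: "\<And>x. (\<lambda>j. \<rho>s (Suc j) *\<^sub>R tens (\<psi> (Suc j)) (\<psi>t (Suc j)) x) sums \<rho> x"
    and rho_psi: "\<And>j. j \<ge> 1 \<Longrightarrow> \<rho> (\<psi> j) = \<rho>s j *\<^sub>R \<psi>t j"
    and rho_gap: "\<And>j. j \<ge> 1 \<Longrightarrow> \<bar>\<rho>s (Suc j)\<bar>\<^sup>2 < \<bar>\<rho>s j\<bar>\<^sup>2"
  (* SVD of D_n C_n^{-1} *)
    and rhoh_mono: "\<And>n j \<omega>. \<omega> \<in> space M \<Longrightarrow> 1 \<le> j \<Longrightarrow> j < n \<Longrightarrow> \<bar>\<rho>h n (Suc j) \<omega>\<bar> \<le> \<bar>\<rho>h n j \<omega>\<bar>"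
    and psin_on: "\<And>n \<omega>. \<omega> \<in> space M \<Longrightarrow> orthonormal_on {1..n} (\<lambda>j. \<psi>n n j \<omega>)"
    and psitn_on: "\<And>n \<omega>. \<omega> \<in> space M \<Longrightarrow> orthonormal_on {1..n} (\<lambda>j. \<psi>tn n j \<omega>)"
    and DnCn_svd: "\<And>n \<omega> h. \<omega> \<in> space M \<Longrightarrow>
        emp_D X n \<omega> (emp_Cinv (\<lambda>j. Cn n j \<omega>) (\<lambda>j. \<phi>n n j \<omega>) n h)
          = (\<Sum>j=1..n. \<rho>h n j \<omega> *\<^sub>R tens (\<psi>n n j \<omega>) (\<psi>tn n j \<omega>) h)"
    and DnCn_psi: "\<And>n j \<omega>. \<omega> \<in> space M \<Longrightarrow> 1 \<le> j \<Longrightarrow> j \<le> n \<Longrightarrow>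
        emp_D X n \<omega> (emp_Cinv (\<lambda>j. Cn n j \<omega>) (\<lambda>j. \<phi>n n j \<omega>) n (\<psi>n n j \<omega>))
          = \<rho>h n j \<omega> *\<^sub>R \<psi>tn n j \<omega>"
  (* truncation parameter *)
    and k_lim: "filterlim k at_top sequentially"
    and k_lt: "\<And>n. n \<ge> 1 \<Longrightarrow> real (k n) / real n < 1"
    and beta: "\<beta> > 1/2"
    and k_rate: "(\<lambda>n. sqrt (real (k n)) * Lambda_gap C (k n))
                   \<in> o(\<lambda>n. real n powr (1/4) / (ln (real n)) powr \<beta>)"
  (* A1 *)
    and A1: "AE \<omega> in M. norm (X 0 \<omega>) < M0"
  (* A2 *)
    and A2: "AE \<omega> in M. \<forall>n. k n \<ge> 1 \<longrightarrow> Cn n (k n) \<omega> > 0"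
  (* A3 *)
    and A3_C: "\<And>j. j \<ge> 1 \<Longrightarrow> C j > 0"
    and A3_D: "nuclear_op (op_expect M (\<lambda>\<omega>. tens (X 0 \<omega>) (X 1 \<omega>)))"
    and A3_rho: "compact_op \<rho>"
  (* A4 *)
    and A4: "\<And>n \<omega>. \<omega> \<in> space M \<Longrightarrow> n \<ge> 1 \<Longrightarrow>
        (SUP j\<in>{1..}. \<bar>\<rho>s j\<bar>) + (SUP j\<in>{1..n}. \<bar>\<rho>h n j \<omega>\<bar>) \<le> 1"
  (* \<rho> is a trace operator *)
    and rho_trace: "nuclear_op \<rho>"
  (* rate M_n *)
    and Mn_rate: "AE \<omega> in M.
        (\<lambda>n. onorm (\<lambda>h. emp_D X n \<omega> (emp_Cinv (\<lambda>j. Cn n j \<omega>) (\<lambda>j. \<phi>n n j \<omega>) n h) - \<rho> h))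
          \<in> O(Mn)"
    and LambdaRho_rate: "(\<lambda>n. Lambda_gap (\<lambda>j. \<bar>\<rho>s j\<bar>\<^sup>2) (k n)) \<in> o(\<lambda>n. 1 / Mn n)"
  shows "(AE \<omega> in M.
           (\<lambda>n. Max ((\<lambda>j. norm (\<psi>n n j \<omega> - sgn01 (inner (\<psi>n n j \<omega>) (\<psi> j)) *\<^sub>R \<psi> j)) ` {1..k n}))
             \<longlonglongrightarrow> 0) \<and>
         (AE \<omega> in M.
           (\<lambda>n. Max ((\<lambda>j. norm (\<psi>tn n j \<omega> - sgn01 (inner (\<psi>tn n j \<omega>) (\<psi>t j)) *\<^sub>R \<psi>t j)) ` {1..k n}))
             \<longlonglongrightarrow> 0)"
proof -
  let ?T = "\<lambda>n \<omega> h. emp_D X n \<omega> (emp_Cinv (\<lambda>j. Cn n j \<omega>) (\<lambda>j. \<phi>n n j \<omega>) n h)"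
  define Lam where "Lam n = Lambda_gap (\<lambda>j. \<bar>\<rho>s j\<bar>\<^sup>2) (k n)" for n
  have gapr: "\<And>l. l \<ge> 1 \<Longrightarrow> (\<lambda>j. \<bar>\<rho>s j\<bar>\<^sup>2) (Suc l) < (\<lambda>j. \<bar>\<rho>s j\<bar>\<^sup>2) l"
    using rho_gap by simp
  have k1: "eventually (\<lambda>n. k n \<ge> 1) sequentially"
    using k_lim unfolding filterlim_at_top by blast
  have n1: "eventually (\<lambda>n. n \<ge> (1::nat)) sequentially" by (rule eventually_ge_at_top)
  have Lpos: "eventually (\<lambda>n. Lam n > 0) sequentially"
    using k1 by eventually_elim (use gap_from_Lambda(1)[where lam="\<lambda>j. \<bar>\<rho>s j\<bar>\<^sup>2", OF gapr] in \<open>auto simp: Lam_def\<close>)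
  have smono: "\<And>i. i \<ge> 1 \<Longrightarrow> (\<rho>s (Suc i))\<^sup>2 \<le> (\<rho>s i)\<^sup>2"
    using rho_gap by (simp add: less_imp_le)
  have main: "(\<lambda>n. Max ((\<lambda>j. norm (\<psi>n n j \<omega> - sgn01 (inner (\<psi>n n j \<omega>) (\<psi> j)) *\<^sub>R \<psi> j)) ` {1..k n}))
             \<longlonglongrightarrow> 0 \<and>
           (\<lambda>n. Max ((\<lambda>j. norm (\<psi>tn n j \<omega> - sgn01 (inner (\<psi>tn n j \<omega>) (\<psi>t j)) *\<^sub>R \<psi>t j)) ` {1..k n}))
             \<longlonglongrightarrow> 0"
    if \<omega>: "\<omega> \<in> space M" and O: "(\<lambda>n. onorm (\<lambda>h. ?T n \<omega> h - \<rho> h)) \<in> O(Mn)" for \<omega>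
  proof -
    define e where "e n = onorm (\<lambda>h. ?T n \<omega> h - \<rho> h)" for n
    have Teq: "?T n \<omega> x = (\<Sum>l=1..n. \<rho>h n l \<omega> *\<^sub>R tens (\<psi>n n l \<omega>) (\<psi>tn n l \<omega>) x)" for n x
      by (rule DnCn_svd[OF \<omega>])
    have blT: "bounded_linear (?T n \<omega>)" for n
    proof -
      have "?T n \<omega> = (\<lambda>x. \<Sum>l\<in>{1..n}. \<rho>h n l \<omega> *\<^sub>R tens (\<psi>n n l \<omega>) (\<psi>tn n l \<omega>) x)"
        by (rule ext) (rule Teq)
      then show ?thesis by (simp only: blin_fin)
    qed
    have bl: "bounded_linear (\<lambda>h. ?T n \<omega> h - \<rho> h)" for n
      by (rule bounded_linear_sub[OF blT rho_lin])
    have e0: "e n \<ge> 0" for n unfolding e_def by (rule onorm_pos_le[OF bl])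
    have close: "norm (?T n \<omega> x - \<rho> x) \<le> e n * norm x" for n x
      unfolding e_def by (rule onorm[OF bl])
    have eO: "e \<in> O(Mn)" using O unfolding e_def[abs_def] .
    have bnd: "norm (\<psi>n n j \<omega> - sgn01 (inner (\<psi>n n j \<omega>) (\<psi> j)) *\<^sub>R \<psi> j) \<le> 4 * e n / (1 / Lam n - 2 * e n)
        \<and> norm (\<psi>tn n j \<omega> - sgn01 (inner (\<psi>tn n j \<omega>) (\<psi>t j)) *\<^sub>R \<psi>t j) \<le> 4 * e n / (1 / Lam n - 2 * e n)"
      if n: "n \<ge> 1" and kn: "k n \<ge> 1" and j: "j \<in> {1..k n}" and lt: "2 * e n < 1 / Lam n" for n j
    proof -
      have sb: "\<And>i. i \<ge> 1 \<Longrightarrow> \<bar>\<rho>s i\<bar> \<le> 1" and \<sigma>b: "\<And>l. l \<in> {1..n} \<Longrightarrow> \<bar>\<rho>h n l \<omega>\<bar> \<le> 1"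
        using sup_bounds[OF rho_sv_mono A4[OF \<omega> n] n] by auto
      have gl: "\<bar>\<rho>s l\<bar>\<^sup>2 - \<bar>\<rho>s (Suc l)\<bar>\<^sup>2 \<ge> 1 / Lam n" if "l \<in> {1..k n}" for l
        using gap_from_Lambda(2)[where lam="\<lambda>j. \<bar>\<rho>s j\<bar>\<^sup>2", OF gapr kn that] by (simp add: Lam_def)
      have knn: "k n < n" using k_lt[OF n] n by (simp add: field_simps)
      have jn: "1 \<le> j" "j \<le> n" using j knn by auto
      have g1: "(\<rho>s j)\<^sup>2 - (\<rho>s (Suc j))\<^sup>2 \<ge> 1 / Lam n" using gl[OF j] by simp
      have g2: "(\<rho>s (j - 1))\<^sup>2 - (\<rho>s j)\<^sup>2 \<ge> 1 / Lam n" if "j \<ge> 2"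
      proof -
        have m: "j - 1 \<in> {1..k n}" using that j by auto
        have sj: "Suc (j - 1) = j" using that by simp
        show ?thesis using gl[OF m] unfolding sj by simp
      qed
      show ?thesis
        using both_bounds[OF psi_on psit_on rho_svd smono sb psin_on[OF \<omega>] psitn_on[OF \<omega>] Teq
            rhoh_mono[OF \<omega>] \<sigma>b close e0 jn g1 g2 lt] by (rule conjI)
    qed
    have maxb: "0 \<le> Max (F ` A) \<and> Max (F ` A) \<le> B"
      if hyp: "finite A" "A \<noteq> {}" "\<And>j. j \<in> A \<Longrightarrow> 0 \<le> F j \<and> F j \<le> B" for A and F :: "nat \<Rightarrow> real" and B
    proof -
      obtain a where a: "a \<in> A" using hyp(2) by blast
      have "F a \<le> Max (F ` A)" using hyp(1) a by (intro Max_ge) auto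
      moreover have "Max (F ` A) \<le> B" using hyp by (subst Max_le_iff) auto
      ultimately show ?thesis using hyp(3)[OF a] by linarith
    qed
    have fb: "eventually (\<lambda>n. Lam n > 0 \<longrightarrow> 2 * e n < 1 / Lam n \<longrightarrow>
        (0 \<le> F1 n \<and> F1 n \<le> 4 * e n / (1 / Lam n - 2 * e n)) \<and>
        (0 \<le> F2 n \<and> F2 n \<le> 4 * e n / (1 / Lam n - 2 * e n))) sequentially"
      if F1: "F1 = (\<lambda>n. Max ((\<lambda>j. norm (\<psi>n n j \<omega> - sgn01 (inner (\<psi>n n j \<omega>) (\<psi> j)) *\<^sub>R \<psi> j)) ` {1..k n}))"
       and F2: "F2 = (\<lambda>n. Max ((\<lambda>j. norm (\<psi>tn n j \<omega> - sgn01 (inner (\<psi>tn n j \<omega>) (\<psi>t j)) *\<^sub>R \<psi>t j)) ` {1..k n}))"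
      for F1 F2
      using n1 k1
    proof eventually_elim
      case (elim n)
      show ?case
      proof (intro impI)
        assume lt: "2 * e n < 1 / Lam n"
        have ne: "{1..k n} \<noteq> {}" using elim by simp
        show "(0 \<le> F1 n \<and> F1 n \<le> 4 * e n / (1 / Lam n - 2 * e n)) \<and>
          (0 \<le> F2 n \<and> F2 n \<le> 4 * e n / (1 / Lam n - 2 * e n))"
          unfolding F1 F2
          by (intro conjI maxb[OF finite_atLeastAtMost ne, THEN conjunct1]
                maxb[OF finite_atLeastAtMost ne, THEN conjunct2])
             (use bnd[OF elim(1) elim(2) _ lt] in auto)
      qed
    qed
    obtain F1 F2 where F1: "F1 = (\<lambda>n. Max ((\<lambda>j. norm (\<psi>n n j \<omega> - sgn01 (inner (\<psi>n n j \<omega>) (\<psi> j)) *\<^sub>R \<psi> j)) ` {1..k n}))"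
       and F2: "F2 = (\<lambda>n. Max ((\<lambda>j. norm (\<psi>tn n j \<omega> - sgn01 (inner (\<psi>tn n j \<omega>) (\<psi>t j)) *\<^sub>R \<psi>t j)) ` {1..k n}))"
      by blast
    have fb': "eventually (\<lambda>n. Lam n > 0 \<longrightarrow> 2 * e n < 1 / Lam n \<longrightarrow>
        (0 \<le> F1 n \<and> F1 n \<le> 4 * e n / (1 / Lam n - 2 * e n)) \<and>
        (0 \<le> F2 n \<and> F2 n \<le> 4 * e n / (1 / Lam n - 2 * e n))) sequentially"
      by (rule fb[OF F1 F2])
    have Lo: "Lam \<in> o(\<lambda>n. 1 / Mn n)" using LambdaRho_rate unfolding Lam_def[abs_def] .
    have "F1 \<longlonglongrightarrow> 0"
      by (rule limit_lemma[OF e0 Lpos eO Lo]) (use fb' in \<open>auto elim: eventually_mono\<close>)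
    moreover have "F2 \<longlonglongrightarrow> 0"
      by (rule limit_lemma[OF e0 Lpos eO Lo]) (use fb' in \<open>auto elim: eventually_mono\<close>)
    ultimately show ?thesis using F1 F2 by simp
  qed
  have ae: "AE \<omega> in M. \<omega> \<in> space M \<and> (\<lambda>n. onorm (\<lambda>h. ?T n \<omega> h - \<rho> h)) \<in> O(Mn)"
    using Mn_rate AE_space by eventually_elim auto
  have all: "AE \<omega> in M. (\<lambda>n. Max ((\<lambda>j. norm (\<psi>n n j \<omega> - sgn01 (inner (\<psi>n n j \<omega>) (\<psi> j)) *\<^sub>R \<psi> j)) ` {1..k n}))
             \<longlonglongrightarrow> 0 \<and>
           (\<lambda>n. Max ((\<lambda>j. norm (\<psi>tn n j \<omega> - sgn01 (inner (\<psi>tn n j \<omega>) (\<psi>t j)) *\<^sub>R \<psi>t j)) ` {1..k n}))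
             \<longlonglongrightarrow> 0"
    using ae
  proof eventually_elim
    case (elim \<omega>)
    then show ?case by (intro main) auto
  qed
  show ?thesis using all unfolding AE_conj_iff .
qed

end
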